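(* Let $G=\mathbb{Z}/2$, regarded as a one-object category, with $R_0=\ast$ and $c:\ast\to G$ the unique functor, so that $\mathbf{D}_G^{op}$ consists of two objects and two parallel arrows between them. Let $\mathcal{T}=\mathbf{Cat}$ be the tribe of small categories whose fibrations are the isofibrations. For a small category $C$, let $X=(C,\mathrm{id}_C)\in\mathbf{Cat}^{G^{op}}$ be $C$ with the trivial action. Then $X$ is $p$-fibrant (i.e. $p^*X$ is Reedy fibrant in $\mathbf{Cat}^{\mathbf{D}_G^{op}}$) if and only if the diagonal functor $C\to C\times C$ is an isofibration, if and only if $C$ is gaunt (every isomorphism of $C$ is an identity). In particular, the $p$-fibrations on $\mathbf{Cat}^{G^{op}}_f$ do not coincide with the pointwise fibrations.
   Context: An isofibration is a functor $F:A\to B$ such that for every object $a$ of $A$ and isomorphism $F(a)\cong b$ in $B$ there is an isomorphism $a\cong a'$ in $A$ mapped to it. $\mathbf{Cat}$ with isofibrations as fibrations is a tribe. Construction of $\mathbf{D}_G$ and $p$: with $\mathbf{F}$ the free-category comonad on $\mathbf{Cat}$, $\mathbf{F}_\simeq(G)$ is the pushout of $\ast\leftarrow\mathbf{F}(\ast)\to\mathbf{F}(G)$, with induced functor $p_0:\mathbf{F}_\simeq(G)\to G$; a "free isomorphism" is the image of a length-one path in $G$. In the twisted arrow category, morphisms from $u:a\to b$ to $u':a'\to b'$ are pairs $(s:a'\to a,t:b\to b')$ with $u'=tus$. $\mathbf{D}_G$ is the full subcategory of $\mathbf{Tw}(\mathbf{F}_\simeq(G))$ on the identity arrow and the free isomorphisms;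 $p$ sends $u:a\to b$ to $p_0(b)$ and $(s,t)$ to $p_0(t)$. A diagram $X$ is $p$-fibrant if $p^*X$ is Reedy fibrant, i.e. each matching map of $p^*X$ (to the limit over non-identity maps into the object in $\mathbf{D}_G$) is a fibration. *)

theory Defs
  imports "HOL-Library.FuncSet"
begin

record ('o,'m) cat =
  Obj  :: "'o set"
  Arr  :: "'m set"
  Dom  :: "'m \<Rightarrow> 'o"
  Cod  :: "'m \<Rightarrow> 'o"
  Id   :: "'o \<Rightarrow> 'm"
  Comp :: "'m \<Rightarrow> 'm \<Rightarrow> 'm"   (* Comp C g f = g \<circ> f *)

definition category :: "('o,'m) cat \<Rightarrow> bool" where
  "category C \<longleftrightarrow>
     (\<forall>f\<in>Arr C. Dom C f \<in> Obj C \<and> Cod C f \<in> Obj C) \<and>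
     (\<forall>x\<in>Obj C. Id C x \<in> Arr C \<and> Dom C (Id C x) = x \<and> Cod C (Id C x) = x) \<and>
     (\<forall>f\<in>Arr C. \<forall>g\<in>Arr C. Cod C f = Dom C g \<longrightarrow>
        Comp C g f \<in> Arr C \<and> Dom C (Comp C g f) = Dom C f \<and> Cod C (Comp C g f) = Cod C g) \<and>
     (\<forall>f\<in>Arr C. Comp C f (Id C (Dom C f)) = f \<and> Comp C (Id C (Cod C f)) f = f) \<and>
     (\<forall>f\<in>Arr C. \<forall>g\<in>Arr C. \<forall>h\<in>Arr C. Cod C f = Dom C g \<longrightarrow> Cod C g = Dom C h \<longrightarrow>
        Comp C h (Comp C g f) = Comp C (Comp C h g) f)"

definition iso :: "('o,'m) cat \<Rightarrow> 'm \<Rightarrow> bool" where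
  "iso C f \<longleftrightarrow> f \<in> Arr C \<and>
     (\<exists>g\<in>Arr C. Dom C g = Cod C f \<and> Cod C g = Dom C f \<and>
        Comp C g f = Id C (Dom C f) \<and> Comp C f g = Id C (Cod C f))"

definition "functor" :: "('o,'m) cat \<Rightarrow> ('p,'n) cat \<Rightarrow> ('o \<Rightarrow> 'p) \<Rightarrow> ('m \<Rightarrow> 'n) \<Rightarrow> bool" where
  "functor A B Fo Fa \<longleftrightarrow>
     (\<forall>x\<in>Obj A. Fo x \<in> Obj B) \<and>
     (\<forall>f\<in>Arr A. Fa f \<in> Arr B \<and> Dom B (Fa f) = Fo (Dom A f) \<and> Cod B (Fa f) = Fo (Cod A f)) \<and>
     (\<forall>x\<in>Obj A. Fa (Id A x) = Id B (Fo x)) \<and>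
     (\<forall>f\<in>Arr A. \<forall>g\<in>Arr A. Cod A f = Dom A g \<longrightarrow> Fa (Comp A g f) = Comp B (Fa g) (Fa f))"

definition isofibration :: "('o,'m) cat \<Rightarrow> ('p,'n) cat \<Rightarrow> ('o \<Rightarrow> 'p) \<Rightarrow> ('m \<Rightarrow> 'n) \<Rightarrow> bool" where
  "isofibration A B Fo Fa \<longleftrightarrow> functor A B Fo Fa \<and>
     (\<forall>a\<in>Obj A. \<forall>\<beta>. iso B \<beta> \<and> Dom B \<beta> = Fo a \<longrightarrow>
        (\<exists>\<alpha>. iso A \<alpha> \<and> Dom A \<alpha> = a \<and> Fa \<alpha> = \<beta>))"

definition gaunt :: "('o,'m) cat \<Rightarrow> bool" where
  "gaunt C \<longleftrightarrow> (\<forall>f. iso C f \<longrightarrow> f = Id C (Dom C f))"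

definition prod_cat :: "('o,'m) cat \<Rightarrow> ('p,'n) cat \<Rightarrow> ('o \<times> 'p, 'm \<times> 'n) cat" where
  "prod_cat A B = \<lparr> Obj = Obj A \<times> Obj B, Arr = Arr A \<times> Arr B,
     Dom = (\<lambda>(f,g). (Dom A f, Dom B g)), Cod = (\<lambda>(f,g). (Cod A f, Cod B g)),
     Id = (\<lambda>(x,y). (Id A x, Id B y)),
     Comp = (\<lambda>(f',g') (f,g). (Comp A f' f, Comp B g' g)) \<rparr>"

text \<open>Power (product indexed by a set I) of a category; for I empty this is the
  terminal category.\<close>
definition pow_cat :: "'i set \<Rightarrow> ('o,'m) cat \<Rightarrow> ('i \<Rightarrow> 'o, 'i \<Rightarrow> 'm) cat" where
  "pow_cat I C = \<lparr> Obj = I \<rightarrow>\<^sub>E Obj C, Arr = I \<rightarrow>\<^sub>E Arr C,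
     Dom = (\<lambda>f. restrict (\<lambda>i. Dom C (f i)) I), Cod = (\<lambda>f. restrict (\<lambda>i. Cod C (f i)) I),
     Id = (\<lambda>x. restrict (\<lambda>i. Id C (x i)) I),
     Comp = (\<lambda>g f. restrict (\<lambda>i. Comp C (g i) (f i)) I) \<rparr>"

definition unit_cat :: "(unit, unit) cat" where
  "unit_cat = \<lparr> Obj = {()}, Arr = {()}, Dom = (\<lambda>_. ()), Cod = (\<lambda>_. ()),
     Id = (\<lambda>_. ()), Comp = (\<lambda>_ _. ()) \<rparr>"

text \<open>G = Z/2 is encoded as bool (False = unit, True = generator g, group law xor).
  F_\<simeq>(G) has one object and its morphisms form the free monoid on g, encoded as nat
  (n stands for g^n); p_0 sends g^n to g^(n mod 2).  An object of Tw(F_\<simeq>(G)) is an arrow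
  g^m; a morphism (s,t) : g^m \<rightarrow> g^n satisfies g^n = t g^m s, i.e. n = s + m + t.
  D_G is the full subcategory on the identity (m = 0) and the free isomorphism g (m = 1).
  A morphism of D_G is encoded as the triple (m, s, t) (source g^m, target g^(s+m+t)).\<close>

definition DG :: "(nat, nat \<times> nat \<times> nat) cat" where
  "DG = \<lparr> Obj = {0, 1},
          Arr = {(m, s, t). m \<in> {0,1} \<and> s + m + t \<in> {0,1}},
          Dom = (\<lambda>(m, s, t). m), Cod = (\<lambda>(m, s, t). s + m + t),
          Id = (\<lambda>m. (m, 0, 0)),
          Comp = (\<lambda>(m', s', t') (m, s, t). (m, s + s', t' + t)) \<rparr>"

text \<open>p : D_G \<rightarrow> G, (s,t) \<mapsto> p_0(t).\<close>
definition p_arr :: "nat \<times> nat \<times> nat \<Rightarrow> bool" where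
  "p_arr = (\<lambda>(m, s, t). odd t)"

definition nonid_into :: "nat \<Rightarrow> (nat \<times> nat \<times> nat) set" where
  "nonid_into d = {f \<in> Arr DG. Cod DG f = d \<and> f \<noteq> Id DG d}"

text \<open>The matching category of D_G at any object is discrete (no non-identity morphisms
  between non-identity maps into d), so the matching object of p^*X at d is the product
  over nonid_into d of the values of p^*X, i.e. a power of C.\<close>
lemma DG_matching_discrete:
  assumes "f \<in> nonid_into d" "f' \<in> nonid_into d" "h \<in> Arr DG"
    and "Dom DG h = Dom DG f" "Cod DG h = Dom DG f'" "Comp DG f' h = f"
  shows "h = Id DG (Dom DG h)"
  using assms by (auto simp: nonid_into_def DG_def split: prod.splits)

text \<open>A G^op-object of Cat is a category C with an action of G by endofunctors, given by
  actO / actA (act True = action of g).  p^*X sends every object of D_G to C and a morphism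
  f of D_G to the endofunctor act (p f) (contravariantly).  The matching map at d is the
  functor C \<rightarrow> C^(nonid_into d), x \<mapsto> (X(p f) x)_f.\<close>
definition match_obj :: "(bool \<Rightarrow> 'o \<Rightarrow> 'o) \<Rightarrow> nat \<Rightarrow> 'o \<Rightarrow> (nat \<times> nat \<times> nat \<Rightarrow> 'o)" where
  "match_obj actO d x = restrict (\<lambda>f. actO (p_arr f) x) (nonid_into d)"

definition match_arr :: "(bool \<Rightarrow> 'm \<Rightarrow> 'm) \<Rightarrow> nat \<Rightarrow> 'm \<Rightarrow> (nat \<times> nat \<times> nat \<Rightarrow> 'm)" where
  "match_arr actA d u = restrict (\<lambda>f. actA (p_arr f) u) (nonid_into d)"

text \<open>X is p-fibrant iff p^*X is Reedy fibrant: every matching map is an isofibration.\<close>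
definition p_fibrant :: "('o,'m) cat \<Rightarrow> (bool \<Rightarrow> 'o \<Rightarrow> 'o) \<Rightarrow> (bool \<Rightarrow> 'm \<Rightarrow> 'm) \<Rightarrow> bool" where
  "p_fibrant C actO actA \<longleftrightarrow>
     (\<forall>d\<in>Obj DG. isofibration C (pow_cat (nonid_into d) C) (match_obj actO d) (match_arr actA d))"

end

theory Submission
  imports Defs
begin

lemma ni1: "nonid_into 1 = {(0,1,0),(0,0,1)}" by (auto simp: nonid_into_def DG_def)
lemma objDG: "Obj DG = {0,1}" by (simp add: DG_def)

lemma id_iso: "category C \<Longrightarrow> x \<in> Obj C \<Longrightarrow> iso C (Id C x)"
  unfolding iso_def category_def by metis

lemma diag_functor: "category C \<Longrightarrow> functor C (prod_cat C C) (\<lambda>x. (x, x)) (\<lambda>u. (u, u))"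
  unfolding functor_def category_def prod_cat_def by auto

lemma pow_functor: "category C \<Longrightarrow>
   functor C (pow_cat I C) (\<lambda>x. restrict (\<lambda>_. x) I) (\<lambda>u. restrict (\<lambda>_. u) I)"
  unfolding functor_def category_def pow_cat_def by (auto simp: restrict_def)

lemma iso_prod_D: "iso (prod_cat A B) (f, g) \<Longrightarrow> iso A f \<and> iso B g"
  unfolding iso_def prod_cat_def by auto

lemma iso_prod_I: "iso A f \<Longrightarrow> iso B g \<Longrightarrow> iso (prod_cat A B) (f, g)"
  unfolding iso_def prod_cat_def by (auto; fastforce)

lemma iso_pow_D: assumes "iso (pow_cat I C) \<beta>" "i \<in> I" shows "iso C (\<beta> i)"
proof -
  from assms(1) obtain \<gamma> where g: "\<gamma> \<in> Arr (pow_cat I C)"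
    "Dom (pow_cat I C) \<gamma> = Cod (pow_cat I C) \<beta>" "Cod (pow_cat I C) \<gamma> = Dom (pow_cat I C) \<beta>"
    "Comp (pow_cat I C) \<gamma> \<beta> = Id (pow_cat I C) (Dom (pow_cat I C) \<beta>)"
    "Comp (pow_cat I C) \<beta> \<gamma> = Id (pow_cat I C) (Cod (pow_cat I C) \<beta>)"
    and b: "\<beta> \<in> Arr (pow_cat I C)" unfolding iso_def by blast
  have "\<gamma> i \<in> Arr C" "\<beta> i \<in> Arr C" using g(1) b assms(2) by (auto simp: pow_cat_def)
  moreover have "Dom C (\<gamma> i) = Cod C (\<beta> i)" using fun_cong[OF g(2), of i] assms(2) by (simp add: pow_cat_def)
  moreover have "Cod C (\<gamma> i) = Dom C (\<beta> i)" using fun_cong[OF g(3), of i] assms(2) by (simp add: pow_cat_def)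
  moreover have "Comp C (\<gamma> i) (\<beta> i) = Id C (Dom C (\<beta> i))" using fun_cong[OF g(4), of i] assms(2) by (simp add: pow_cat_def)
  moreover have "Comp C (\<beta> i) (\<gamma> i) = Id C (Cod C (\<beta> i))" using fun_cong[OF g(5), of i] assms(2) by (simp add: pow_cat_def)
  ultimately show ?thesis unfolding iso_def by blast
qed

lemma diag_gaunt: assumes "category C"
  shows "isofibration C (prod_cat C C) (\<lambda>x. (x, x)) (\<lambda>u. (u, u)) \<longleftrightarrow> gaunt C"
proof
  assume h: "isofibration C (prod_cat C C) (\<lambda>x. (x, x)) (\<lambda>u. (u, u))"
  show "gaunt C" unfolding gaunt_def
  proof (intro allI impI)
    fix f assume f: "iso C f"
    let ?a = "Dom C f"
    have a: "?a \<in> Obj C" using f assms unfolding iso_def category_def by blast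
    have "iso (prod_cat C C) (f, Id C ?a)" using iso_prod_I[OF f id_iso[OF assms a]] .
    moreover have "Dom (prod_cat C C) (f, Id C ?a) = (?a, ?a)"
      using assms a unfolding prod_cat_def category_def by auto
    ultimately obtain \<alpha> where "(\<alpha>, \<alpha>) = (f, Id C ?a)"
      using h a unfolding isofibration_def by blast
    then show "f = Id C ?a" by (metis prod.inject)
  qed
next
  assume g: "gaunt C"
  show "isofibration C (prod_cat C C) (\<lambda>x. (x, x)) (\<lambda>u. (u, u))"
    unfolding isofibration_def
  proof (intro conjI diag_functor[OF assms] ballI allI impI)
    fix a \<beta> assume a: "a \<in> Obj C" and b: "iso (prod_cat C C) \<beta> \<and> Dom (prod_cat C C) \<beta> = (a, a)"
    obtain f h where fh: "\<beta> = (f, h)" by (cases \<beta>)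
    have i: "iso C f" "iso C h" using iso_prod_D[of C C f h] b fh by auto
    have d: "Dom C f = a" "Dom C h = a" using b fh by (auto simp: prod_cat_def)
    have "f = Id C a" "h = Id C a" using g i d unfolding gaunt_def by auto
    then show "\<exists>\<alpha>. iso C \<alpha> \<and> Dom C \<alpha> = a \<and> (\<alpha>, \<alpha>) = \<beta>"
      using fh id_iso[OF assms a] assms a unfolding category_def by auto
  qed
qed

lemma pow_gaunt_fib: assumes "category C" "gaunt C"
  shows "isofibration C (pow_cat I C) (\<lambda>x. restrict (\<lambda>_. x) I) (\<lambda>u. restrict (\<lambda>_. u) I)"
  unfolding isofibration_def
proof (intro conjI pow_functor[OF assms(1)] ballI allI impI)
  fix a \<beta> assume a: "a \<in> Obj C" and b: "iso (pow_cat I C) \<beta> \<and> Dom (pow_cat I C) \<beta> = restrict (\<lambda>_. a) I"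
  have bext: "\<beta> \<in> I \<rightarrow>\<^sub>E Arr C" using b unfolding iso_def pow_cat_def by auto
  have "\<beta> i = Id C a" if i: "i \<in> I" for i
  proof -
    have "iso C (\<beta> i)" using iso_pow_D[of I C \<beta> i] b i by blast
    then have e1: "\<beta> i = Id C (Dom C (\<beta> i))" using assms(2) unfolding gaunt_def by blast
    have "Dom (pow_cat I C) \<beta> i = a" using b i by simp
    then have "Dom C (\<beta> i) = a" using i by (simp add: pow_cat_def)
    with e1 show ?thesis by simp
  qed
  then have bi: "\<And>i. i \<in> I \<Longrightarrow> \<beta> i = Id C a" .
  have "restrict (\<lambda>_. Id C a) I = \<beta>"
  proof
    fix i show "restrict (\<lambda>_. Id C a) I i = \<beta> i"
      using bi[of i] bext by (cases "i \<in> I") (auto simp: PiE_def extensional_def)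
  qed
  then show "\<exists>\<alpha>. iso C \<alpha> \<and> Dom C \<alpha> = a \<and> restrict (\<lambda>_. \<alpha>) I = \<beta>"
    using id_iso[OF assms(1) a] assms(1) a unfolding category_def by auto
qed

lemma pow_fib_gaunt: assumes "category C" "i1 \<in> I" "i2 \<in> I" "i1 \<noteq> i2"
  and h: "isofibration C (pow_cat I C) (\<lambda>x. restrict (\<lambda>_. x) I) (\<lambda>u. restrict (\<lambda>_. u) I)"
  shows "gaunt C"
  unfolding gaunt_def
proof (intro allI impI)
  fix f assume f: "iso C f"
  let ?a = "Dom C f"
  from f obtain g where g: "g \<in> Arr C" "Dom C g = Cod C f" "Cod C g = ?a"
    "Comp C g f = Id C ?a" "Comp C f g = Id C (Cod C f)" and fA: "f \<in> Arr C"
    unfolding iso_def by blast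
  have a: "?a \<in> Obj C" using fA assms(1) unfolding category_def by blast
  have ida: "Id C ?a \<in> Arr C" "Dom C (Id C ?a) = ?a" "Cod C (Id C ?a) = ?a"
    "Comp C (Id C ?a) (Id C ?a) = Id C ?a"
    using assms(1) a unfolding category_def by metis+
  define \<beta> where "\<beta> = restrict (\<lambda>i. if i = i1 then f else Id C ?a) I"
  define \<gamma> where "\<gamma> = restrict (\<lambda>i. if i = i1 then g else Id C ?a) I"
  have "iso (pow_cat I C) \<beta>"
    unfolding iso_def
  proof (intro conjI bexI)
    show "\<beta> \<in> Arr (pow_cat I C)" "\<gamma> \<in> Arr (pow_cat I C)"
      using fA g ida by (auto simp: \<beta>_def \<gamma>_def pow_cat_def)
    show "Dom (pow_cat I C) \<gamma> = Cod (pow_cat I C) \<beta>"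
      using g ida by (auto simp: \<beta>_def \<gamma>_def pow_cat_def restrict_def)
    show "Cod (pow_cat I C) \<gamma> = Dom (pow_cat I C) \<beta>"
      using g ida by (auto simp: \<beta>_def \<gamma>_def pow_cat_def restrict_def)
    show "Comp (pow_cat I C) \<gamma> \<beta> = Id (pow_cat I C) (Dom (pow_cat I C) \<beta>)"
      using g ida by (auto simp: \<beta>_def \<gamma>_def pow_cat_def restrict_def)
    show "Comp (pow_cat I C) \<beta> \<gamma> = Id (pow_cat I C) (Cod (pow_cat I C) \<beta>)"
      using g ida by (auto simp: \<beta>_def \<gamma>_def pow_cat_def restrict_def)
  qed
  moreover have "Dom (pow_cat I C) \<beta> = restrict (\<lambda>_. ?a) I"
    using ida by (auto simp: \<beta>_def pow_cat_def restrict_def)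
  ultimately obtain \<alpha> where "restrict (\<lambda>_. \<alpha>) I = \<beta>"
    using h a unfolding isofibration_def by blast
  then have e: "\<And>i. restrict (\<lambda>_. \<alpha>) I i = \<beta> i" by simp
  have 1: "\<alpha> = f" using e[of i1] assms(2) by (simp add: \<beta>_def)
  have "\<alpha> = Id C ?a" using e[of i2] assms(2-4) by (simp add: \<beta>_def)
  with 1 have "\<alpha> = f" "\<alpha> = Id C ?a" by simp_all
  then show "f = Id C ?a" by metis
qed

lemma pfib_gaunt: assumes "category C"
  shows "p_fibrant C (\<lambda>_ x. x) (\<lambda>_ u. u) \<longleftrightarrow> gaunt C"
proof
  assume "p_fibrant C (\<lambda>_ x. x) (\<lambda>_ u. u)"
  then have "isofibration C (pow_cat (nonid_into 1) C) (match_obj (\<lambda>_ x. x) 1) (match_arr (\<lambda>_ u. u) 1)"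
    unfolding p_fibrant_def objDG by blast
  then have h: "isofibration C (pow_cat (nonid_into 1) C) (\<lambda>x. restrict (\<lambda>_. x) (nonid_into 1)) (\<lambda>u. restrict (\<lambda>_. u) (nonid_into 1))"
    unfolding match_obj_def match_arr_def .
  have i: "(0::nat,1::nat,0::nat) \<in> nonid_into 1" "(0::nat,0::nat,1::nat) \<in> nonid_into 1"
     "(0::nat,1::nat,0::nat) \<noteq> (0,0,1)" unfolding ni1 by auto
  show "gaunt C" using pow_fib_gaunt[OF assms i h] .
next
  assume g: "gaunt C"
  show "p_fibrant C (\<lambda>_ x. x) (\<lambda>_ u. u)"
    unfolding p_fibrant_def match_obj_def match_arr_def
  proof
    fix d :: nat
    show "isofibration C (pow_cat (nonid_into d) C) (\<lambda>x. restrict (\<lambda>_. x) (nonid_into d)) (\<lambda>u. restrict (\<lambda>_. u) (nonid_into d))"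
      by (rule pow_gaunt_fib[OF assms g])
  qed
qed

definition Wiso :: "(bool, bool \<times> bool) cat" where
  "Wiso = \<lparr> Obj = UNIV, Arr = UNIV, Dom = fst, Cod = snd, Id = (\<lambda>x. (x, x)),
     Comp = (\<lambda>g f. (fst f, snd g)) \<rparr>"

lemma Wiso_cat: "category Wiso" unfolding category_def Wiso_def by auto

lemma Wiso_not_gaunt: "\<not> gaunt Wiso"
proof -
  have "iso Wiso (False, True)" unfolding iso_def Wiso_def
    by (auto intro!: bexI[of _ "(True, False)"])
  then show ?thesis unfolding gaunt_def Wiso_def by force
qed

lemma Wiso_fib: "isofibration Wiso unit_cat (\<lambda>_. ()) (\<lambda>_. ())"
  unfolding isofibration_def functor_def unit_cat_def
  using id_iso[OF Wiso_cat] by (auto simp: Wiso_def)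

theorem mainTheorem7:
  fixes C :: "('o, 'm) cat"
  assumes "category C"
  shows "(p_fibrant C (\<lambda>_ x. x) (\<lambda>_ u. u) \<longleftrightarrow>
            isofibration C (prod_cat C C) (\<lambda>x. (x, x)) (\<lambda>u. (u, u)))
       \<and> (isofibration C (prod_cat C C) (\<lambda>x. (x, x)) (\<lambda>u. (u, u)) \<longleftrightarrow> gaunt C)
       \<and> (\<exists>C' :: (bool, bool \<times> bool) cat. category C'
            \<and> isofibration C' unit_cat (\<lambda>_. ()) (\<lambda>_. ())
            \<and> \<not> p_fibrant C' (\<lambda>_ x. x) (\<lambda>_ u. u))"
  using pfib_gaunt[OF assms] diag_gaunt[OF assms] Wiso_cat Wiso_fib Wiso_not_gaunt
    pfib_gaunt[OF Wiso_cat] by blast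

end
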